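(* Let $\beta>1$ and define $\psi_\beta:[0,1]\to[0,1]$ by $\psi_\beta(x)=\psi_1(x):=2^{\beta-1}x^\beta$ for $x\in[0,1/2]$ and $\psi_\beta(x)=\psi_2(x):=2^{\beta-1}(x-1/2)^\beta+1/2$ for $x\in[1/2,1]$. Let $a_0=b_0=1$ and for $k\ge1$ let $$a_k=\int_0^{1/2}\int_0^{\psi_1(x_1)}\cdots\int_0^{\psi_1(x_{k-1})}dx_k\cdots dx_1,\qquad b_k=\int_{1/2}^{1}\int_{1/2}^{\psi_2(x_1)}\cdots\int_{1/2}^{\psi_2(x_{k-1})}dx_k\cdots dx_1,$$ $$d_k=\int_0^{1}\int_0^{\psi_\beta(x_1)}\cdots\int_0^{\psi_\beta(x_{k-1})}dx_k\cdots dx_1 .$$ Then for $n=1,2,\dots$: (1) $d_n=\sum_{l=0}^n b_l\,a_{n-l}$; (2) $d_n<\dfrac{\beta^{(-n^2/2+n)/4}}{n!}$. *)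

theory Defs
  imports "HOL-Analysis.Analysis"
begin

definition psi1 :: "real \<Rightarrow> real \<Rightarrow> real" where
  "psi1 \<beta> x = 2 powr (\<beta> - 1) * x powr \<beta>"

definition psi2 :: "real \<Rightarrow> real \<Rightarrow> real" where
  "psi2 \<beta> x = 2 powr (\<beta> - 1) * (x - 1/2) powr \<beta> + 1/2"

definition psi :: "real \<Rightarrow> real \<Rightarrow> real" where
  "psi \<beta> x = (if x \<le> 1/2 then psi1 \<beta> x else psi2 \<beta> x)"

text \<open>Iterated integral: iter_int lo f k y =
  int_lo^y int_lo^{f x_1} ... int_lo^{f x_(k-1)} dx_k ... dx_1, with iter_int lo f 0 y = 1.\<close>
fun iter_int :: "real \<Rightarrow> (real \<Rightarrow> real) \<Rightarrow> nat \<Rightarrow> real \<Rightarrow> real" where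
  "iter_int lo f 0 y = 1"
| "iter_int lo f (Suc k) y = integral {lo..y} (\<lambda>x. iter_int lo f k (f x))"

definition a_seq :: "real \<Rightarrow> nat \<Rightarrow> real" where
  "a_seq \<beta> k = iter_int 0 (psi1 \<beta>) k (1/2)"

definition b_seq :: "real \<Rightarrow> nat \<Rightarrow> real" where
  "b_seq \<beta> k = iter_int (1/2) (psi2 \<beta>) k 1"

definition d_seq :: "real \<Rightarrow> nat \<Rightarrow> real" where
  "d_seq \<beta> k = iter_int 0 (psi \<beta>) k 1"

end

theory Submission
  imports Defs
begin

fun Ee :: "real \<Rightarrow> nat \<Rightarrow> real" where
  "Ee b 0 = 0"
| "Ee b (Suc k) = b * Ee b k + 1"

fun Cc :: "real \<Rightarrow> nat \<Rightarrow> real" where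
  "Cc b 0 = 1"
| "Cc b (Suc k) = Cc b k * 2 powr ((b - 1) * Ee b k) / (b * Ee b k + 1)"

lemma Ee_nonneg: "b > 1 \<Longrightarrow> Ee b k \<ge> 0"
  by (induction k) auto

declare Ee.simps[simp del] Cc.simps[simp del]

lemma Cc_nonneg: "b > 1 \<Longrightarrow> Cc b k \<ge> 0"
  by (induction k) (auto intro!: divide_nonneg_pos mult_nonneg_nonneg simp: Ee_nonneg add_pos_nonneg Cc.simps)

lemma psi1_range:
  assumes "b > 1" "0 \<le> x" "x \<le> 1/2"
  shows "0 \<le> psi1 b x \<and> psi1 b x \<le> 1/2"
proof -
  have "x powr b \<le> (1/2) powr b" using assms by (intro powr_mono2) auto
  moreover have "2 powr (b - 1) * (1/2) powr b = 1/2"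
    by (simp add: powr_diff powr_divide)
  moreover have "0 \<le> 2 powr (b - 1)" by simp
  ultimately have "2 powr (b - 1) * x powr b \<le> 1/2"
    by (metis mult_left_mono)
  then show ?thesis unfolding psi1_def by simp
qed

lemma psi1_powr:
  fixes x b e :: real
  assumes "0 \<le> x"
  shows "psi1 b x powr e = 2 powr ((b - 1) * e) * x powr (b * e)"
  unfolding psi1_def using assms by (simp add: powr_mult powr_powr)

lemma has_integral_powr_shift:
  fixes p c y :: real
  assumes "p \<ge> 0" "c \<le> y"
  shows "((\<lambda>x. (x - c) powr p) has_integral ((y - c) powr (p + 1) / (p + 1))) {c..y}"
proof -
  have "((\<lambda>x. x powr p) has_integral ((y - c) powr (p + 1) / (p + 1))) {0..y - c}"
    using has_integral_powr_from_0[of p "y - c"] assms by simp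
  from has_integral_shift_real_ivl[OF this, of "-c"] show ?thesis by simp
qed

lemma closed_A:
  assumes "b > 1" "0 \<le> y" "y \<le> 1/2"
  shows "((\<lambda>x. iter_int 0 (psi1 b) k (psi1 b x)) has_integral iter_int 0 (psi1 b) (Suc k) y) {0..y}
     \<and> iter_int 0 (psi1 b) (Suc k) y = Cc b (Suc k) * y powr Ee b (Suc k)"
  using assms(2,3)
proof (induction k arbitrary: y)
  case 0
  have "((\<lambda>x. 1::real) has_integral y) {0..y}"
    using has_integral_const_real[of "1::real" 0 y] 0 by simp
  then show ?case using 0 by (simp add: integral_unique Ee.simps Cc.simps)
next
  case (Suc k)
  let ?E = "Ee b (Suc k)" and ?C = "Cc b (Suc k)"
  have E0: "?E \<ge> 0" using Ee_nonneg assms(1) by blast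
  have eq: "iter_int 0 (psi1 b) (Suc k) (psi1 b x) = ?C * 2 powr ((b - 1) * ?E) * x powr (b * ?E)"
    if "x \<in> {0..y}" for x
  proof -
    have "0 \<le> psi1 b x \<and> psi1 b x \<le> 1/2" using psi1_range[OF assms(1)] that Suc.prems by auto
    then have "iter_int 0 (psi1 b) (Suc k) (psi1 b x) = ?C * psi1 b x powr ?E"
      using Suc.IH by blast
    then show ?thesis using that psi1_powr[of x b ?E] by simp
  qed
  have "((\<lambda>x. (x - 0) powr (b * ?E)) has_integral ((y - 0) powr (b * ?E + 1) / (b * ?E + 1))) {0..y}"
    using Suc.prems E0 assms(1) by (intro has_integral_powr_shift) auto
  then have I: "((\<lambda>x. ?C * 2 powr ((b - 1) * ?E) * x powr (b * ?E)) has_integral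
      (?C * 2 powr ((b - 1) * ?E) * (y powr (b * ?E + 1) / (b * ?E + 1)))) {0..y}"
    by (intro has_integral_mult_right) simp
  have I2: "((\<lambda>x. iter_int 0 (psi1 b) (Suc k) (psi1 b x)) has_integral
      (?C * 2 powr ((b - 1) * ?E) * (y powr (b * ?E + 1) / (b * ?E + 1)))) {0..y}"
    using I eq by (subst has_integral_cong) auto
  have v: "iter_int 0 (psi1 b) (Suc (Suc k)) y = ?C * 2 powr ((b - 1) * ?E) * (y powr (b * ?E + 1) / (b * ?E + 1))"
    using I2 by (simp add: integral_unique)
  have "Cc b (Suc (Suc k)) * y powr Ee b (Suc (Suc k)) = ?C * 2 powr ((b - 1) * ?E) * (y powr (b * ?E + 1) / (b * ?E + 1))"
    by (simp only: Cc.simps(2)[of b "Suc k"] Ee.simps(2)[of b "Suc k"]) simp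
  then show ?case using I2 v by simp
qed


lemma psi1_half: "psi1 b (1/2) = 1/2"
  unfolding psi1_def by (simp add: powr_diff powr_divide)

lemma psi2_eq: "psi2 b x = psi1 b (x - 1/2) + 1/2"
  unfolding psi1_def psi2_def by simp

lemma psi2_range:
  assumes "b > 1" "1/2 \<le> x" "x \<le> 1"
  shows "1/2 \<le> psi2 b x \<and> psi2 b x \<le> 1"
  using psi1_range[OF assms(1), of "x - 1/2"] assms unfolding psi2_eq by auto

lemma psi_low: "x \<le> 1/2 \<Longrightarrow> psi b x = psi1 b x"
  unfolding psi_def by simp

lemma psi_high: "1/2 \<le> x \<Longrightarrow> psi b x = psi2 b x"
proof (cases "x = 1/2")
  case True
  have "psi2 b (1/2) = 1/2" by (simp add: psi2_def)
  then show ?thesis unfolding True psi_def using psi1_half[of b] by simp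
qed (simp add: psi_def)

lemma closed_B:
  assumes "b > 1" "1/2 \<le> y" "y \<le> 1"
  shows "((\<lambda>x. iter_int (1/2) (psi2 b) k (psi2 b x)) has_integral iter_int (1/2) (psi2 b) (Suc k) y) {1/2..y}
     \<and> iter_int (1/2) (psi2 b) (Suc k) y = Cc b (Suc k) * (y - 1/2) powr Ee b (Suc k)"
  using assms(2,3)
proof (induction k arbitrary: y)
  case 0
  have "((\<lambda>x. 1::real) has_integral (y - 1/2)) {1/2..y}"
    using has_integral_const_real[of "1::real" "1/2" y] 0 by simp
  then show ?case using 0 by (simp add: integral_unique Ee.simps Cc.simps)
next
  case (Suc k)
  let ?E = "Ee b (Suc k)" and ?C = "Cc b (Suc k)"
  have E0: "?E \<ge> 0" using Ee_nonneg assms(1) by blast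
  have eq: "iter_int (1/2) (psi2 b) (Suc k) (psi2 b x) = ?C * 2 powr ((b - 1) * ?E) * (x - 1/2) powr (b * ?E)"
    if "x \<in> {1/2..y}" for x
  proof -
    have "1/2 \<le> psi2 b x \<and> psi2 b x \<le> 1" using psi2_range[OF assms(1)] that Suc.prems by auto
    then have "iter_int (1/2) (psi2 b) (Suc k) (psi2 b x) = ?C * (psi2 b x - 1/2) powr ?E"
      using Suc.IH by blast
    then show ?thesis using that psi1_powr[of "x - 1/2" b ?E] by (simp add: psi2_eq)
  qed
  have "((\<lambda>x. (x - 1/2) powr (b * ?E)) has_integral ((y - 1/2) powr (b * ?E + 1) / (b * ?E + 1))) {1/2..y}"
    using Suc.prems E0 assms(1) by (intro has_integral_powr_shift) auto
  then have I: "((\<lambda>x. ?C * 2 powr ((b - 1) * ?E) * (x - 1/2) powr (b * ?E)) has_integral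
      (?C * 2 powr ((b - 1) * ?E) * ((y - 1/2) powr (b * ?E + 1) / (b * ?E + 1)))) {1/2..y}"
    by (intro has_integral_mult_right) simp
  have I2: "((\<lambda>x. iter_int (1/2) (psi2 b) (Suc k) (psi2 b x)) has_integral
      (?C * 2 powr ((b - 1) * ?E) * ((y - 1/2) powr (b * ?E + 1) / (b * ?E + 1)))) {1/2..y}"
    using I eq by (subst has_integral_cong) auto
  have v: "iter_int (1/2) (psi2 b) (Suc (Suc k)) y = ?C * 2 powr ((b - 1) * ?E) * ((y - 1/2) powr (b * ?E + 1) / (b * ?E + 1))"
    using I2 by (simp add: integral_unique)
  have "Cc b (Suc (Suc k)) * (y - 1/2) powr Ee b (Suc (Suc k)) = ?C * 2 powr ((b - 1) * ?E) * ((y - 1/2) powr (b * ?E + 1) / (b * ?E + 1))"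
    by (simp only: Cc.simps(2)[of b "Suc k"] Ee.simps(2)[of b "Suc k"]) simp
  then show ?case using I2 v by simp
qed

lemma G_low:
  assumes "b > 1" "0 \<le> y" "y \<le> 1/2"
  shows "iter_int 0 (psi b) k y = iter_int 0 (psi1 b) k y"
  using assms(2,3)
proof (induction k arbitrary: y)
  case 0
  then show ?case by simp
next
  case (Suc k)
  have "integral {0..y} (\<lambda>x. iter_int 0 (psi b) k (psi b x)) = integral {0..y} (\<lambda>x. iter_int 0 (psi1 b) k (psi1 b x))"
  proof (rule integral_cong)
    fix x assume x: "x \<in> {0..y}"
    then have "psi b x = psi1 b x" using Suc.prems psi_low by auto
    moreover have "0 \<le> psi1 b x \<and> psi1 b x \<le> 1/2" using psi1_range[OF assms(1)] x Suc.prems by auto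
    ultimately show "iter_int 0 (psi b) k (psi b x) = iter_int 0 (psi1 b) k (psi1 b x)"
      using Suc.IH by simp
  qed
  then show ?case by simp
qed

lemma a_closed: "b > 1 \<Longrightarrow> a_seq b k = Cc b k * (1/2) powr Ee b k"
  using closed_A[of b "1/2"] by (cases k) (auto simp: a_seq_def Cc.simps Ee.simps)

lemma b_closed: "b > 1 \<Longrightarrow> b_seq b k = Cc b k * (1/2) powr Ee b k"
  using closed_B[of b 1] by (cases k) (auto simp: b_seq_def Cc.simps Ee.simps)

lemma G_high:
  assumes "b > 1" "1/2 \<le> y" "y \<le> 1"
  shows "iter_int 0 (psi b) k y = (\<Sum>l=0..k. iter_int (1/2) (psi2 b) l y * a_seq b (k - l))"
  using assms(2,3)
proof (induction k arbitrary: y)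
  case 0
  then show ?case by (simp add: a_seq_def)
next
  case (Suc k)
  have h1: "((\<lambda>x. iter_int 0 (psi b) k (psi b x)) has_integral a_seq b (Suc k)) {0..1/2}"
  proof -
    have "((\<lambda>x. iter_int 0 (psi1 b) k (psi1 b x)) has_integral a_seq b (Suc k)) {0..1/2}"
      using conjunct1[OF closed_A[OF assms(1), of "1/2" k]] unfolding a_seq_def by (simp only:)
    moreover have "iter_int 0 (psi b) k (psi b x) = iter_int 0 (psi1 b) k (psi1 b x)" if "x \<in> {0..1/2}" for x
      using that psi_low[of x b] G_low[OF assms(1), of "psi1 b x" k] psi1_range[OF assms(1), of x] by auto
    ultimately show ?thesis by (subst has_integral_cong) auto
  qed
  have h2: "((\<lambda>x. iter_int 0 (psi b) k (psi b x)) has_integral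
      (\<Sum>l=0..k. iter_int (1/2) (psi2 b) (Suc l) y * a_seq b (k - l))) {1/2..y}"
  proof -
    have "((\<lambda>x. \<Sum>l=0..k. iter_int (1/2) (psi2 b) l (psi2 b x) * a_seq b (k - l)) has_integral
      (\<Sum>l=0..k. iter_int (1/2) (psi2 b) (Suc l) y * a_seq b (k - l))) {1/2..y}"
      by (intro has_integral_sum has_integral_mult_left conjunct1[OF closed_B[OF assms(1)]]) (use Suc.prems in auto)
    moreover have "iter_int 0 (psi b) k (psi b x) = (\<Sum>l=0..k. iter_int (1/2) (psi2 b) l (psi2 b x) * a_seq b (k - l))"
      if "x \<in> {1/2..y}" for x
      using that psi_high[of x b] Suc.IH[of "psi2 b x"] psi2_range[OF assms(1), of x] Suc.prems by auto
    ultimately show ?thesis by (subst has_integral_cong) auto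
  qed
  have "((\<lambda>x. iter_int 0 (psi b) k (psi b x)) has_integral
      (a_seq b (Suc k) + (\<Sum>l=0..k. iter_int (1/2) (psi2 b) (Suc l) y * a_seq b (k - l)))) {0..y}"
    using has_integral_combine[OF _ _ h1 h2] Suc.prems by auto
  then have "iter_int 0 (psi b) (Suc k) y = a_seq b (Suc k) + (\<Sum>l=0..k. iter_int (1/2) (psi2 b) (Suc l) y * a_seq b (k - l))"
    by (simp add: integral_unique)
  also have "\<dots> = (\<Sum>l=0..Suc k. iter_int (1/2) (psi2 b) l y * a_seq b (Suc k - l))"
    by (subst sum.atLeast0_atMost_Suc_shift) simp
  finally show ?case .
qed

lemma part1:
  assumes "b > 1"
  shows "d_seq b n = (\<Sum>l=0..n. b_seq b l * a_seq b (n - l))"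
  using G_high[OF assms, of 1 n] unfolding d_seq_def b_seq_def by simp


lemma Ee_sum: "Ee b k = (\<Sum>t<k. b ^ t)"
  by (induction k) (simp_all add: Ee.simps sum.lessThan_Suc_shift sum_distrib_left del: sum.lessThan_Suc)

lemma amgm2:
  fixes b :: real
  assumes "b > 1" "t + s = m"
  shows "b ^ t + b ^ s \<ge> 2 * b powr (real m / 2)"
proof -
  define u where "u = b powr (real t / 2)"
  define v where "v = b powr (real s / 2)"
  have uu: "u * u = b ^ t" unfolding u_def using assms
    by (simp add: powr_add[symmetric] powr_realpow)
  have vv: "v * v = b ^ s" unfolding v_def using assms
    by (simp add: powr_add[symmetric] powr_realpow)
  have e: "real t / 2 + real s / 2 = real m / 2"
    by (metis assms(2) add_divide_distrib of_nat_add)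
  have uv: "u * v = b powr (real m / 2)" unfolding u_def v_def using assms
    by (simp add: powr_add[symmetric] e)
  have "0 \<le> (u - v) * (u - v)" by simp
  then show ?thesis using uu vv uv by (simp add: algebra_simps)
qed

lemma Ee_lower:
  assumes "b > 1"
  shows "Ee b k \<ge> real k * b powr ((real k - 1) / 2)"
proof -
  have "2 * Ee b k = (\<Sum>t<k. b ^ t) + (\<Sum>t<k. b ^ (k - Suc t))"
    unfolding Ee_sum by (simp add: sum.nat_diff_reindex)
  also have "\<dots> = (\<Sum>t<k. b ^ t + b ^ (k - Suc t))" by (simp add: sum.distrib)
  also have "\<dots> \<ge> (\<Sum>t<k. 2 * b powr ((real k - 1) / 2))"
  proof (rule sum_mono)
    fix t assume t: "t \<in> {..<k}"
    then have "b ^ t + b ^ (k - Suc t) \<ge> 2 * b powr (real (k - 1) / 2)"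
      using assms by (intro amgm2) auto
    moreover have "real (k - 1) = real k - 1" using t by (simp add: of_nat_diff)
    ultimately show "2 * b powr ((real k - 1) / 2) \<le> b ^ t + b ^ (k - Suc t)" by simp
  qed
  finally show ?thesis by simp
qed

lemma half_powr: "(1/2::real) powr z = 2 powr (- z)"
proof -
  have "(1/2::real) powr z = 1 powr z / 2 powr z" by (rule powr_divide)
  then show ?thesis by (simp add: powr_minus_divide)
qed

lemma a_nonneg: "b > 1 \<Longrightarrow> 0 \<le> a_seq b k"
  using a_closed[of b k] Cc_nonneg[of b k] by simp

lemma a_rec:
  assumes "b > 1"
  shows "a_seq b (Suc k) = a_seq b k / (2 * Ee b (Suc k))"
proof -
  let ?E = "Ee b k" and ?C = "Cc b k"
  have "b * ?E \<ge> 0" using Ee_nonneg[OF assms, of k] assms by simp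
  then have pos: "b * ?E + 1 > 0" by linarith
  have p: "2 powr ((b - 1) * ?E) * 2 powr (- (b * ?E + 1)) = 2 powr (- ?E) / 2"
  proof -
    have ex: "(b - 1) * ?E + - (b * ?E + 1) = - ?E - 1" by (simp add: algebra_simps)
    have "2 powr ((b - 1) * ?E) * 2 powr (- (b * ?E + 1)) = (2::real) powr (- ?E - 1)"
      by (simp only: powr_add[symmetric] ex)
    also have "\<dots> = 2 powr (- ?E) / 2" by (simp add: powr_diff)
    finally show ?thesis .
  qed
  have "a_seq b (Suc k) = ?C * (2 powr ((b - 1) * ?E) * 2 powr (- (b * ?E + 1))) / (b * ?E + 1)"
    using a_closed[OF assms, of "Suc k"] by (simp add: Cc.simps Ee.simps half_powr)
  also have "\<dots> = ?C * 2 powr (- ?E) / (2 * (b * ?E + 1))" unfolding p by simp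
  also have "\<dots> = a_seq b k / (2 * Ee b (Suc k))"
    using a_closed[OF assms, of k] by (simp add: Ee.simps half_powr)
  finally show ?thesis .
qed

lemma alg:
  fixes P Q F :: real
  assumes "Q > 0" "F > 0"
  shows "((1/2)^k * P / F) / (2 * (real (Suc k) * Q)) = (1/2)^(Suc k) * (P / Q) / (real (Suc k) * F)"
  using assms by (simp add: field_simps)

definition Bd :: "real \<Rightarrow> nat \<Rightarrow> real" where
  "Bd b k = (1/2)^k * b powr (- (real k * (real k - 1)) / 4) / fact k"

lemma a_bound:
  assumes "b > 1"
  shows "a_seq b k \<le> Bd b k"
proof (induction k)
  case 0
  then show ?case using a_closed[OF assms, of 0] assms by (simp add: Bd_def Cc.simps Ee.simps)
next
  case (Suc k)
  have w: "0 < 2 * (real (Suc k) * b powr (real k / 2))" using assms by simp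
  have wz: "2 * (real (Suc k) * b powr (real k / 2)) \<le> 2 * Ee b (Suc k)"
    using Ee_lower[OF assms, of "Suc k"] by simp
  have "a_seq b (Suc k) = a_seq b k / (2 * Ee b (Suc k))" by (rule a_rec[OF assms])
  also have "\<dots> \<le> Bd b k / (2 * (real (Suc k) * b powr (real k / 2)))"
    using Suc.IH a_nonneg[OF assms, of k] w wz by (intro frac_le) auto
  also have "\<dots> = Bd b (Suc k)"
  proof -
    have eq1: "b powr (- (real (Suc k) * (real (Suc k) - 1)) / 4)
        = b powr (- (real k * (real k - 1)) / 4) / b powr (real k / 2)"
    proof -
      have "- (real (Suc k) * (real (Suc k) - 1)) / 4 = - (real k * (real k - 1)) / 4 - real k / 2"
        by (simp add: field_simps)
      then show ?thesis by (simp add: powr_diff)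
    qed
    have eq2: "fact (Suc k) = real (Suc k) * fact k" by (simp del: of_nat_Suc)
    have X: "Bd b (Suc k) = (1/2)^(Suc k) * (b powr (- (real k * (real k - 1)) / 4) / b powr (real k / 2)) / (real (Suc k) * fact k)"
      unfolding Bd_def by (simp only: eq1 eq2)
    show ?thesis by (subst X, unfold Bd_def, rule alg) (use assms in auto)
  qed
  finally show ?case .
qed


lemma exp_ineq:
  fixes l m :: nat
  shows "(real (l + m) - (real (l + m))\<^sup>2 / 2) / 4 - (- (real l * (real l - 1)) / 4 + - (real m * (real m - 1)) / 4)
         = (real l - real m)\<^sup>2 / 8"
  by (simp add: power2_eq_square field_simps)

lemma Bd_nonneg: "b > 1 \<Longrightarrow> 0 \<le> Bd b k"
  using a_bound[of b k] a_nonneg[of b k] by linarith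

lemma term_bound:
  assumes "b > 1" "l \<le> n"
  shows "a_seq b l * a_seq b (n - l) \<le> (1/2)^n * b powr (- (real l * (real l - 1)) / 4 + - (real (n - l) * (real (n - l) - 1)) / 4) / (fact l * fact (n - l))"
proof -
  have "a_seq b l * a_seq b (n - l) \<le> Bd b l * Bd b (n - l)"
    using assms a_bound a_nonneg Bd_nonneg by (intro mult_mono) auto
  also have "\<dots> = ((1/2)^l * (1/2)^(n - l)) * (b powr (- (real l * (real l - 1)) / 4) * b powr (- (real (n - l) * (real (n - l) - 1)) / 4)) / (fact l * fact (n - l))"
    unfolding Bd_def by simp
  also have "\<dots> = (1/2)^n * b powr (- (real l * (real l - 1)) / 4 + - (real (n - l) * (real (n - l) - 1)) / 4) / (fact l * fact (n - l))"
  proof -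
    have lm: "l + (n - l) = n" using assms(2) by simp
    show ?thesis by (simp only: power_add[symmetric] powr_add[symmetric] lm)
  qed
  finally show ?thesis .
qed

lemma inv_fact_sum: "(\<Sum>l=0..n. 1 / (fact l * fact (n - l)) :: real) = 2 ^ n / fact n"
proof -
  have "(\<Sum>l=0..n. 1 / (fact l * fact (n - l)) :: real) = (\<Sum>l=0..n. real (n choose l) / fact n)"
    by (intro sum.cong refl) (simp add: binomial_fact field_simps)
  also have "\<dots> = real (\<Sum>l\<le>n. n choose l) / fact n"
    by (simp add: sum_divide_distrib atLeast0AtMost)
  also have "\<dots> = 2 ^ n / fact n" by (simp add: choose_row_sum)
  finally show ?thesis .
qed

theorem lemma4p6:
  fixes \<beta> :: real and n :: nat
  assumes "\<beta> > 1" and "n \<ge> 1"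
  shows "d_seq \<beta> n = (\<Sum>l=0..n. b_seq \<beta> l * a_seq \<beta> (n - l))
     \<and> d_seq \<beta> n < \<beta> powr ((real n - (real n)\<^sup>2 / 2) / 4) / fact n"
proof
  show P1: "d_seq \<beta> n = (\<Sum>l=0..n. b_seq \<beta> l * a_seq \<beta> (n - l))"
    by (rule part1[OF assms(1)])
  let ?Y = "(real n - (real n)\<^sup>2 / 2) / 4"
  let ?g = "\<lambda>l. (1/2)^n * \<beta> powr ?Y / (fact l * fact (n - l)) :: real"
  let ?X = "\<lambda>l. - (real l * (real l - 1)) / 4 + - (real (n - l) * (real (n - l) - 1)) / 4"
  have ba: "b_seq \<beta> l = a_seq \<beta> l" for l using a_closed b_closed assms(1) by simp
  have le: "a_seq \<beta> l * a_seq \<beta> (n - l) \<le> ?g l" if "l \<in> {0..n}" for l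
  proof -
    have lm: "l + (n - l) = n" using that by simp
    have "?X l \<le> ?Y" using exp_ineq[of l "n - l"] unfolding lm
      by (smt (verit) zero_le_power2 divide_nonneg_pos)
    then have "\<beta> powr ?X l \<le> \<beta> powr ?Y" using assms(1) by (intro powr_mono) auto
    then have "(1/2)^n * \<beta> powr ?X l / (fact l * fact (n - l)) \<le> ?g l"
      by (intro divide_right_mono mult_left_mono) auto
    then show ?thesis using term_bound[OF assms(1), of l n] that by simp
  qed
  have lt: "a_seq \<beta> 0 * a_seq \<beta> (n - 0) < ?g 0"
  proof -
    have e: "?Y - ?X 0 = (real 0 - real n)\<^sup>2 / 8" using exp_ineq[of 0 n] by simp
    have "(real 0 - real n)\<^sup>2 / 8 > 0" using assms(2) by simp
    then have "?X 0 < ?Y" using e by linarith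
    then have "\<beta> powr ?X 0 < \<beta> powr ?Y" using assms(1) by (intro powr_less_mono) auto
    then have "(1/2)^n * \<beta> powr ?X 0 / (fact 0 * fact (n - 0)) < ?g 0"
      by (intro divide_strict_right_mono mult_strict_left_mono) auto
    then show ?thesis using term_bound[OF assms(1), of 0 n] by simp
  qed
  have "d_seq \<beta> n = (\<Sum>l=0..n. a_seq \<beta> l * a_seq \<beta> (n - l))" using P1 ba by simp
  also have "\<dots> < (\<Sum>l=0..n. ?g l)"
  proof (rule sum_strict_mono_ex1)
    show "\<exists>a\<in>{0..n}. a_seq \<beta> a * a_seq \<beta> (n - a) < ?g a"
      using lt by (intro bexI[of _ 0]) auto
  qed (use le in auto)
  also have "\<dots> = (1/2)^n * \<beta> powr ?Y * (\<Sum>l=0..n. 1 / (fact l * fact (n - l)))"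
    by (simp add: sum_distrib_left)
  also have "\<dots> = ((1/2)^n * 2^n) * \<beta> powr ?Y / fact n" unfolding inv_fact_sum by simp
  also have "\<dots> = \<beta> powr ?Y / fact n" by (simp add: power_mult_distrib[symmetric])
  finally show "d_seq \<beta> n < \<beta> powr ?Y / fact n" .
qed

end
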